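(* Assume $b_1<n^*$ and $b_2<m^*$. Then: (1) The equilibrium payoffs of both players are the same in all Nash equilibria of $\Gamma(b_1,b_2)$, and for every Nash equilibrium $(\sigma^{1*},\sigma^{2*})$, $$\frac{b_1b_2}{n^*}\le U_1(\sigma^{1*},\sigma^{2*})\le\min\Bigl\{\frac{b_1b_2}{m^*},b_2\Bigr\},\qquad \max\Bigl\{0,b_2\Bigl(1-\frac{b_1}{m^*}\Bigr)\Bigr\}\le U_2(\sigma^{1*},\sigma^{2*})\le b_2\Bigl(1-\frac{b_1}{n^*}\Bigr).$$ (2) The expected detection rate $r(\sigma^* )$ takes the same value in all Nash equilibria $\sigma^*$ of $\Gamma(b_1,b_2)$, and $\frac{b_1}{n^*}\le r(\sigma^* )\le\min\{\frac{b_1}{m^*},1\}$.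
   Context: Detection model: finite nonempty sets $\mathcal V$, $\mathcal E$, monitoring sets $\mathcal C_i\subseteq\mathcal E$ ($i\in\mathcal V$) with every $e\in\mathcal E$ in some $\mathcal C_i$; $\mathcal C_S=\bigcup_{i\in S}\mathcal C_i$; $F(S,T)=|\mathcal C_S\cap T|$. Set cover: $S\subseteq\mathcal V$ with $\mathcal C_S=\mathcal E$; $n^*$ = minimum size of a set cover. Set packing: $T\subseteq\mathcal E$ with $|\mathcal C_i\cap T|\le1$ for all $i$; $m^*$ = maximum size of a set packing. Game $\Gamma(b_1,b_2)$ ($b_1,b_2$ positive integers): $\mathcal A_1=\{S\subseteq\mathcal V:|S|\le b_1\}$, $\mathcal A_2=\{T\subseteq\mathcal E:|T|\le b_2\}$; mixed strategies $\sigma^1\in\Delta(\mathcal A_1)$, $\sigma^2\in\Delta(\mathcal A_2)$ (independent); payoffs $U_1=\mathbb E[F(S,T)]$, $U_2=\mathbb E[|T|]-\mathbb E[F(S,T)]$; Nash equilibrium in mixed strategies as usual. The expected detection rate of a profile $\sigma=(\sigma^1,\sigma^2)$ whose attack strategy is supported on nonempty sets is $r(\sigma)=\mathbb E_{S\sim\sigma^1,T\sim\sigma^2}\bigl[F(S,T)/|T|\bigr]$ (in the equilibria considered here all attack plans in the support have size $b_2$). *)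

theory Defs
  imports "HOL-Probability.Probability"
begin

definition detection_model :: "'v set \<Rightarrow> 'e set \<Rightarrow> ('v \<Rightarrow> 'e set) \<Rightarrow> bool" where
  "detection_model V E C \<longleftrightarrow> finite V \<and> finite E \<and> V \<noteq> {} \<and> E \<noteq> {}
     \<and> (\<forall>i\<in>V. C i \<subseteq> E) \<and> (\<forall>e\<in>E. \<exists>i\<in>V. e \<in> C i)"

definition CS :: "('v \<Rightarrow> 'e set) \<Rightarrow> 'v set \<Rightarrow> 'e set" where
  "CS C S = (\<Union>i\<in>S. C i)"

definition detF :: "('v \<Rightarrow> 'e set) \<Rightarrow> 'v set \<Rightarrow> 'e set \<Rightarrow> nat" where
  "detF C S T = card (CS C S \<inter> T)"

definition set_cover :: "'v set \<Rightarrow> 'e set \<Rightarrow> ('v \<Rightarrow> 'e set) \<Rightarrow> 'v set \<Rightarrow> bool" where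
  "set_cover V E C S \<longleftrightarrow> S \<subseteq> V \<and> CS C S = E"

definition set_packing :: "'v set \<Rightarrow> 'e set \<Rightarrow> ('v \<Rightarrow> 'e set) \<Rightarrow> 'e set \<Rightarrow> bool" where
  "set_packing V E C T \<longleftrightarrow> T \<subseteq> E \<and> (\<forall>i\<in>V. card (C i \<inter> T) \<le> 1)"

definition n_star :: "'v set \<Rightarrow> 'e set \<Rightarrow> ('v \<Rightarrow> 'e set) \<Rightarrow> nat" where
  "n_star V E C = Min {card S | S. set_cover V E C S}"

definition m_star :: "'v set \<Rightarrow> 'e set \<Rightarrow> ('v \<Rightarrow> 'e set) \<Rightarrow> nat" where
  "m_star V E C = Max {card T | T. set_packing V E C T}"

definition A1 :: "'v set \<Rightarrow> nat \<Rightarrow> 'v set set" where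
  "A1 V b1 = {S. S \<subseteq> V \<and> card S \<le> b1}"

definition A2 :: "'e set \<Rightarrow> nat \<Rightarrow> 'e set set" where
  "A2 E b2 = {T. T \<subseteq> E \<and> card T \<le> b2}"

definition U1 :: "('v \<Rightarrow> 'e set) \<Rightarrow> 'v set pmf \<Rightarrow> 'e set pmf \<Rightarrow> real" where
  "U1 C \<sigma>1 \<sigma>2 = measure_pmf.expectation (pair_pmf \<sigma>1 \<sigma>2) (\<lambda>(S, T). real (detF C S T))"

definition U2 :: "('v \<Rightarrow> 'e set) \<Rightarrow> 'v set pmf \<Rightarrow> 'e set pmf \<Rightarrow> real" where
  "U2 C \<sigma>1 \<sigma>2 = measure_pmf.expectation \<sigma>2 (\<lambda>T. real (card T)) - U1 C \<sigma>1 \<sigma>2"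

definition detection_rate :: "('v \<Rightarrow> 'e set) \<Rightarrow> 'v set pmf \<Rightarrow> 'e set pmf \<Rightarrow> real" where
  "detection_rate C \<sigma>1 \<sigma>2 =
     measure_pmf.expectation (pair_pmf \<sigma>1 \<sigma>2) (\<lambda>(S, T). real (detF C S T) / real (card T))"

definition is_NE :: "'v set \<Rightarrow> 'e set \<Rightarrow> ('v \<Rightarrow> 'e set) \<Rightarrow> nat \<Rightarrow> nat
                     \<Rightarrow> 'v set pmf \<Rightarrow> 'e set pmf \<Rightarrow> bool" where
  "is_NE V E C b1 b2 \<sigma>1 \<sigma>2 \<longleftrightarrow>
     set_pmf \<sigma>1 \<subseteq> A1 V b1 \<and> set_pmf \<sigma>2 \<subseteq> A2 E b2
     \<and> (\<forall>\<tau>. set_pmf \<tau> \<subseteq> A1 V b1 \<longrightarrow> U1 C \<tau> \<sigma>2 \<le> U1 C \<sigma>1 \<sigma>2)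
     \<and> (\<forall>\<tau>. set_pmf \<tau> \<subseteq> A2 E b2 \<longrightarrow> U2 C \<sigma>1 \<tau> \<le> U2 C \<sigma>1 \<sigma>2)"

end

theory Submission imports Defs begin

lemma card_inter_sum:
  assumes "finite T"
  shows "real (card (A \<inter> T)) = (\<Sum>e\<in>T. if e \<in> A then 1 else 0)"
  using assms by (simp add: sum.If_cases Int_commute)


lemma count_with:
  assumes fA: "finite A" and x: "x \<in> A" and k: "0 < k"
  shows "card {S. S \<subseteq> A \<and> card S = k \<and> x \<in> S} = (card A - 1) choose (k - 1)"
proof -
  have bij: "bij_betw (\<lambda>S. S - {x}) {S. S \<subseteq> A \<and> card S = k \<and> x \<in> S} {S. S \<subseteq> A - {x} \<and> card S = k - 1}"
  proof (rule bij_betw_byWitness[where f'="insert x"])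
    show "\<forall>S\<in>{S. S \<subseteq> A \<and> card S = k \<and> x \<in> S}. insert x (S - {x}) = S" by auto
    show "\<forall>S\<in>{S. S \<subseteq> A - {x} \<and> card S = k - 1}. insert x S - {x} = S" by auto
    show "(\<lambda>S. S - {x}) ` {S. S \<subseteq> A \<and> card S = k \<and> x \<in> S} \<subseteq> {S. S \<subseteq> A - {x} \<and> card S = k - 1}"
    proof
      fix S' assume "S' \<in> (\<lambda>S. S - {x}) ` {S. S \<subseteq> A \<and> card S = k \<and> x \<in> S}"
      then obtain S where S: "S \<subseteq> A" "card S = k" "x \<in> S" and S': "S' = S - {x}" by auto
      have "finite S" using S(1) fA finite_subset by blast
      then have "card (S - {x}) = k - 1" using S by simp
      then show "S' \<in> {S. S \<subseteq> A - {x} \<and> card S = k - 1}" using S S' by auto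
    qed
    show "insert x ` {S. S \<subseteq> A - {x} \<and> card S = k - 1} \<subseteq> {S. S \<subseteq> A \<and> card S = k \<and> x \<in> S}"
    proof
      fix S' assume "S' \<in> insert x ` {S. S \<subseteq> A - {x} \<and> card S = k - 1}"
      then obtain S where S: "S \<subseteq> A - {x}" "card S = k - 1" and S': "S' = insert x S" by auto
      have "finite S" using S(1) fA finite_subset by blast
      moreover have "x \<notin> S" using S(1) by auto
      ultimately have "card (insert x S) = k" using S(2) k by simp
      then show "S' \<in> {S. S \<subseteq> A \<and> card S = k \<and> x \<in> S}" using S S' x by auto
    qed
  qed
  have "card {S. S \<subseteq> A \<and> card S = k \<and> x \<in> S} = card {S. S \<subseteq> A - {x} \<and> card S = k - 1}"
    using bij by (rule bij_betw_same_card)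
  also have "\<dots> = card (A - {x}) choose (k - 1)" by (rule n_subsets) (use fA in simp)
  also have "card (A - {x}) = card A - 1" using fA x by simp
  finally show ?thesis .
qed

lemma dc:
  assumes "finite X" "finite T"
  shows "(\<Sum>S\<in>X. real (card (f S \<inter> T))) = (\<Sum>e\<in>T. real (card {S\<in>X. e \<in> f S}))"
proof -
  have "(\<Sum>S\<in>X. real (card (f S \<inter> T))) = (\<Sum>S\<in>X. \<Sum>e\<in>T. if e \<in> f S then 1 else 0)"
    using card_inter_sum[OF assms(2)] by simp
  also have "\<dots> = (\<Sum>e\<in>T. \<Sum>S\<in>X. if e \<in> f S then 1 else 0)" by (rule sum.swap)
  also have "\<dots> = (\<Sum>e\<in>T. real (card {S\<in>X. e \<in> f S}))"
  proof (rule sum.cong[OF refl])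
    fix e
    have "{S\<in>X. e \<in> f S} = {S. e \<in> f S} \<inter> X" by auto
    then show "(\<Sum>S\<in>X. if e \<in> f S then 1 else 0) = real (card {S\<in>X. e \<in> f S})"
      using card_inter_sum[OF assms(1), of "{S. e \<in> f S}"] by simp
  qed
  finally show ?thesis .
qed

lemma pair_sum:
  fixes g :: "'a \<Rightarrow> 'b \<Rightarrow> real"
  assumes "finite A" "finite B" "set_pmf p \<subseteq> A" "set_pmf q \<subseteq> B"
  shows "measure_pmf.expectation (pair_pmf p q) (\<lambda>(S, T). g S T) = (\<Sum>S\<in>A. \<Sum>T\<in>B. pmf p S * pmf q T * g S T)"
proof -
  have "measure_pmf.expectation (pair_pmf p q) (\<lambda>(S, T). g S T) = (\<Sum>x\<in>A \<times> B. (case x of (S, T) \<Rightarrow> g S T) * pmf (pair_pmf p q) x)"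
    by (rule integral_measure_pmf_real) (use assms in auto)
  also have "\<dots> = (\<Sum>x\<in>A \<times> B. (case x of (S, T) \<Rightarrow> pmf p S * pmf q T * g S T))"
    by (rule sum.cong) (auto simp: pmf_pair)
  also have "\<dots> = (\<Sum>S\<in>A. \<Sum>T\<in>B. pmf p S * pmf q T * g S T)"
    by (simp add: sum.cartesian_product)
  finally show ?thesis .
qed

locale game =
  fixes V :: "'v set" and E :: "'e set" and C :: "'v \<Rightarrow> 'e set" and b1 b2 :: nat
  assumes model: "detection_model V E C"
    and b1_pos: "b1 > 0" and b2_pos: "b2 > 0"
    and b1_lt: "b1 < n_star V E C" and b2_lt: "b2 < m_star V E C"
begin

abbreviation "AA1 \<equiv> A1 V b1"
abbreviation "AA2 \<equiv> A2 E b2"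

lemma finV: "finite V" and finE: "finite E" and CsubE: "i \<in> V \<Longrightarrow> C i \<subseteq> E"
  and covE: "e \<in> E \<Longrightarrow> \<exists>i\<in>V. e \<in> C i"
  using model unfolding detection_model_def by auto

lemma finA1: "finite AA1"
proof -
  have "AA1 \<subseteq> Pow V" unfolding A1_def by auto
  then show ?thesis using finV finite_subset by blast
qed

lemma finA2: "finite AA2"
proof -
  have "AA2 \<subseteq> Pow E" unfolding A2_def by auto
  then show ?thesis using finE finite_subset by blast
qed

lemma CS_sub: "S \<subseteq> V \<Longrightarrow> CS C S \<subseteq> E"
  using CsubE unfolding CS_def by auto

definition v1 :: "'e set pmf \<Rightarrow> 'v set \<Rightarrow> real" where
  "v1 q S = (\<Sum>T\<in>AA2. pmf q T * real (detF C S T))"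
definition w1 :: "'v set pmf \<Rightarrow> 'e set \<Rightarrow> real" where
  "w1 p T = (\<Sum>S\<in>AA1. pmf p S * real (detF C S T))"
definition pe :: "'v set pmf \<Rightarrow> 'e \<Rightarrow> real" where
  "pe p e = (\<Sum>S\<in>AA1. pmf p S * (if e \<in> CS C S then 1 else 0))"
definition Ec :: "'e set pmf \<Rightarrow> real" where
  "Ec q = (\<Sum>T\<in>AA2. pmf q T * real (card T))"

lemma U1_sum:
  assumes p: "set_pmf p \<subseteq> AA1" and q: "set_pmf q \<subseteq> AA2"
  shows "U1 C p q = (\<Sum>S\<in>AA1. \<Sum>T\<in>AA2. pmf p S * pmf q T * real (detF C S T))"
proof -
  have "U1 C p q = (\<Sum>x\<in>AA1 \<times> AA2. (case x of (S, T) \<Rightarrow> real (detF C S T)) * pmf (pair_pmf p q) x)"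
    unfolding U1_def
    by (rule integral_measure_pmf_real) (use finA1 finA2 p q in auto)
  also have "\<dots> = (\<Sum>x\<in>AA1 \<times> AA2. (case x of (S, T) \<Rightarrow> pmf p S * pmf q T * real (detF C S T)))"
    by (rule sum.cong) (auto simp: pmf_pair)
  also have "\<dots> = (\<Sum>S\<in>AA1. \<Sum>T\<in>AA2. pmf p S * pmf q T * real (detF C S T))"
    by (simp add: sum.cartesian_product)
  finally show ?thesis .
qed

lemma U1_v1:
  assumes "set_pmf p \<subseteq> AA1" "set_pmf q \<subseteq> AA2"
  shows "U1 C p q = (\<Sum>S\<in>AA1. pmf p S * v1 q S)"
  unfolding U1_sum[OF assms] v1_def by (simp add: sum_distrib_left mult_ac)

lemma U1_w1:
  assumes "set_pmf p \<subseteq> AA1" "set_pmf q \<subseteq> AA2"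
  shows "U1 C p q = (\<Sum>T\<in>AA2. pmf q T * w1 p T)"
  unfolding U1_sum[OF assms] w1_def by (subst sum.swap) (simp add: sum_distrib_left mult_ac)

lemma Ec_eq:
  assumes "set_pmf q \<subseteq> AA2"
  shows "measure_pmf.expectation q (\<lambda>T. real (card T)) = Ec q"
  unfolding Ec_def
  by (subst integral_measure_pmf_real[where A=AA2]) (use finA2 assms in \<open>auto simp: mult_ac\<close>)

lemma U2_eq:
  assumes "set_pmf p \<subseteq> AA1" "set_pmf q \<subseteq> AA2"
  shows "U2 C p q = Ec q - U1 C p q"
  unfolding U2_def Ec_eq[OF assms(2)] ..

lemma U1_ret:
  assumes "set_pmf q \<subseteq> AA2" "S \<in> AA1"
  shows "U1 C (return_pmf S) q = v1 q S"
  using assms U1_v1[of "return_pmf S" q] finA1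
  by (simp add: indicator_def)

lemma Ec_ret: "T \<in> AA2 \<Longrightarrow> Ec (return_pmf T) = real (card T)"
  unfolding Ec_def using finA2 by (simp add: indicator_def)

lemma U2_ret:
  assumes "set_pmf p \<subseteq> AA1" "T \<in> AA2"
  shows "U2 C p (return_pmf T) = real (card T) - w1 p T"
  using assms U2_eq[of p "return_pmf T"] U1_w1[of p "return_pmf T"] finA2 Ec_ret
  by (simp add: indicator_def)

lemma w1_pe:
  assumes "T \<in> AA2"
  shows "w1 p T = (\<Sum>e\<in>T. pe p e)"
proof -
  have fT: "finite T" using assms finE unfolding A2_def by (auto intro: finite_subset)
  have "w1 p T = (\<Sum>S\<in>AA1. pmf p S * (\<Sum>e\<in>T. if e \<in> CS C S then 1 else 0))"
    unfolding w1_def detF_def using card_inter_sum[OF fT] by simp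
  also have "\<dots> = (\<Sum>e\<in>T. pe p e)"
    unfolding pe_def by (subst sum.swap) (simp add: sum_distrib_left)
  finally show ?thesis .
qed


lemma cover_V: "set_cover V E C V"
  unfolding set_cover_def CS_def using CsubE covE by auto

lemma covers_fin: "finite {card S | S. set_cover V E C S}"
proof -
  have "{card S | S. set_cover V E C S} \<subseteq> card ` Pow V" unfolding set_cover_def by auto
  then show ?thesis using finV finite_subset by blast
qed

lemma nstar_le: "set_cover V E C S \<Longrightarrow> n_star V E C \<le> card S"
  unfolding n_star_def using covers_fin by (intro Min_le) auto

lemma nstar_ex: "\<exists>S. set_cover V E C S \<and> card S = n_star V E C"
proof -
  have "n_star V E C \<in> {card S | S. set_cover V E C S}"
    unfolding n_star_def using covers_fin cover_V by (intro Min_in) auto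
  then show ?thesis by auto
qed

lemma mstar_ex: "\<exists>P. set_packing V E C P \<and> card P = m_star V E C"
proof -
  have f: "finite {card T | T. set_packing V E C T}"
  proof -
    have "{card T | T. set_packing V E C T} \<subseteq> card ` Pow E" unfolding set_packing_def by auto
    then show ?thesis using finE finite_subset by blast
  qed
  have "set_packing V E C {}" unfolding set_packing_def by auto
  then have "m_star V E C \<in> {card T | T. set_packing V E C T}"
    unfolding m_star_def using f by (intro Max_in) auto
  then show ?thesis by auto
qed

lemma support_eq:
  fixes f :: "'a \<Rightarrow> real"
  assumes "finite A" "set_pmf p \<subseteq> A" "(\<Sum>x\<in>A. pmf p x * f x) = c"
    "\<And>x. x \<in> A \<Longrightarrow> f x \<le> c" "x \<in> set_pmf p"
  shows "f x = c"
proof -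
  have s1: "(\<Sum>x\<in>A. pmf p x) = 1" using sum_pmf_eq_1 assms(1,2) by blast
  have "(\<Sum>x\<in>A. pmf p x * (c - f x)) = (\<Sum>x\<in>A. pmf p x * c - pmf p x * f x)"
    by (simp add: right_diff_distrib)
  also have "\<dots> = (\<Sum>x\<in>A. pmf p x) * c - (\<Sum>x\<in>A. pmf p x * f x)"
    by (simp add: sum_subtractf sum_distrib_right)
  also have "\<dots> = 0" using s1 assms(3) by simp
  finally have z: "(\<Sum>x\<in>A. pmf p x * (c - f x)) = 0" .
  have nn: "\<forall>y\<in>A. 0 \<le> pmf p y * (c - f y)" using assms(4) by (simp add: pmf_nonneg)
  have xA: "x \<in> A" using assms(2,5) by auto
  have iff: "((\<Sum>y\<in>A. pmf p y * (c - f y)) = 0) = (\<forall>y\<in>A. pmf p y * (c - f y) = 0)"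
    by (rule sum_nonneg_eq_0_iff[OF assms(1)]) (use nn in blast)
  have "pmf p x * (c - f x) = 0" using iff[THEN iffD1, OF z] xA by blast
  moreover have "pmf p x > 0" using assms(5) by (simp add: pmf_positive)
  ultimately show ?thesis by simp
qed

lemma pe_le1: "set_pmf p \<subseteq> AA1 \<Longrightarrow> pe p e \<le> 1"
proof -
  assume a: "set_pmf p \<subseteq> AA1"
  have "pe p e \<le> (\<Sum>S\<in>AA1. pmf p S)" unfolding pe_def
    by (rule sum_mono) (simp add: pmf_nonneg)
  also have "\<dots> = 1" using sum_pmf_eq_1 finA1 a by blast
  finally show ?thesis .
qed

lemma pe_one:
  assumes a: "set_pmf p \<subseteq> AA1" and one: "pe p e \<ge> 1" and S: "S \<in> set_pmf p"
  shows "e \<in> CS C S"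
proof -
  let ?f = "\<lambda>S. if e \<in> CS C S then 1 else (0::real)"
  have "pe p e = 1" using pe_le1[OF a, of e] one by simp
  then have "?f S = 1"
    by (intro support_eq[OF finA1 a, of ?f 1]) (use S in \<open>auto simp: pe_def\<close>)
  then show ?thesis by (simp split: if_splits)
qed

context
  fixes \<sigma>1 \<sigma>2
  assumes ne: "is_NE V E C b1 b2 \<sigma>1 \<sigma>2"
begin

lemma s1: "set_pmf \<sigma>1 \<subseteq> AA1" and s2: "set_pmf \<sigma>2 \<subseteq> AA2"
  and ne3: "\<And>\<tau>. set_pmf \<tau> \<subseteq> AA1 \<Longrightarrow> U1 C \<tau> \<sigma>2 \<le> U1 C \<sigma>1 \<sigma>2"
  and ne4: "\<And>\<tau>. set_pmf \<tau> \<subseteq> AA2 \<Longrightarrow> U2 C \<sigma>1 \<tau> \<le> U2 C \<sigma>1 \<sigma>2"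
  using ne unfolding is_NE_def by blast+

lemma pure1: "S \<in> AA1 \<Longrightarrow> v1 \<sigma>2 S \<le> U1 C \<sigma>1 \<sigma>2"
proof -
  assume S: "S \<in> AA1"
  have "set_pmf (return_pmf S) \<subseteq> AA1" using S by simp
  then have "U1 C (return_pmf S) \<sigma>2 \<le> U1 C \<sigma>1 \<sigma>2" by (rule ne3)
  then show ?thesis using U1_ret[OF s2 S] by simp
qed

lemma pure2: "T \<in> AA2 \<Longrightarrow> real (card T) - w1 \<sigma>1 T \<le> Ec \<sigma>2 - U1 C \<sigma>1 \<sigma>2"
proof -
  assume T: "T \<in> AA2"
  have "set_pmf (return_pmf T) \<subseteq> AA2" using T by simp
  then have "U2 C \<sigma>1 (return_pmf T) \<le> U2 C \<sigma>1 \<sigma>2" by (rule ne4)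
  then show ?thesis using U2_ret[OF s1 T] U2_eq[OF s1 s2] by simp
qed

lemma supp1: "S \<in> set_pmf \<sigma>1 \<Longrightarrow> v1 \<sigma>2 S = U1 C \<sigma>1 \<sigma>2"
  by (rule support_eq[OF finA1 s1]) (use U1_v1[OF s1 s2] pure1 in auto)

lemma supp2: "T \<in> set_pmf \<sigma>2 \<Longrightarrow> real (card T) - w1 \<sigma>1 T = Ec \<sigma>2 - U1 C \<sigma>1 \<sigma>2"
proof (rule support_eq[OF finA2 s2])
  show "(\<Sum>T\<in>AA2. pmf \<sigma>2 T * (real (card T) - w1 \<sigma>1 T)) = Ec \<sigma>2 - U1 C \<sigma>1 \<sigma>2"
    unfolding U1_w1[OF s1 s2] Ec_def by (simp add: algebra_simps sum_subtractf)
qed (use pure2 in auto)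


definition gval :: "'e set \<Rightarrow> real" where
  "gval T = (\<Sum>e\<in>T. 1 - pe \<sigma>1 e)"

lemma gval_eq: "T \<in> AA2 \<Longrightarrow> gval T = real (card T) - w1 \<sigma>1 T"
  unfolding gval_def w1_pe by (simp add: sum_subtractf)

lemma gopt: "T0 \<in> set_pmf \<sigma>2 \<Longrightarrow> T' \<in> AA2 \<Longrightarrow> gval T' \<le> gval T0"
proof -
  assume a: "T0 \<in> set_pmf \<sigma>2" "T' \<in> AA2"
  have T0A: "T0 \<in> AA2" using a(1) s2 by auto
  have "gval T' = real (card T') - w1 \<sigma>1 T'" using gval_eq[OF a(2)] .
  also have "\<dots> \<le> Ec \<sigma>2 - U1 C \<sigma>1 \<sigma>2" using pure2[OF a(2)] .
  also have "\<dots> = real (card T0) - w1 \<sigma>1 T0" using supp2[OF a(1)] by simp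
  also have "\<dots> = gval T0" using gval_eq[OF T0A] by simp
  finally show ?thesis .
qed

lemma finT: "T \<in> AA2 \<Longrightarrow> finite T"
  using finE unfolding A2_def by (auto intro: finite_subset)

lemma gval_insert: "T \<in> AA2 \<Longrightarrow> k \<notin> T \<Longrightarrow> gval (insert k T) = gval T + (1 - pe \<sigma>1 k)"
  unfolding gval_def using finT by simp

lemma gval_remove: "T \<in> AA2 \<Longrightarrow> e \<in> T \<Longrightarrow> gval T = gval (T - {e}) + (1 - pe \<sigma>1 e)"
  unfolding gval_def using finT by (simp add: sum.remove)

lemma NE_card_aux: "b2 \<le> card {e\<in>E. pe \<sigma>1 e < 1}"
proof (rule ccontr)
  define K where "K = {e\<in>E. pe \<sigma>1 e < 1}"
  assume a: "\<not> b2 \<le> card {e\<in>E. pe \<sigma>1 e < 1}"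
  have "\<not> b2 \<le> card K" using a unfolding K_def .
  then have cK: "card K < b2" by (simp only: not_le)
  have KE: "K \<subseteq> E" unfolding K_def by blast
  have finK: "finite K" using finite_subset[OF KE finE] .
  have p1: "e \<in> E \<Longrightarrow> e \<notin> K \<Longrightarrow> pe \<sigma>1 e \<ge> 1" for e unfolding K_def by (simp add: not_less)
  have KT: "K \<subseteq> T0" if T0: "T0 \<in> set_pmf \<sigma>2" for T0
  proof (rule ccontr)
    assume "\<not> K \<subseteq> T0"
    then obtain k where k: "k \<in> K" "k \<notin> T0" by auto
    have T0A: "T0 \<in> AA2" using T0 s2 by auto
    have pk: "pe \<sigma>1 k < 1" using k unfolding K_def by auto
    have kE: "k \<in> E" using k KE by auto
    show False
    proof (cases "card T0 < b2")
      case True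
      have "insert k T0 \<in> AA2" using T0A True kE finT[OF T0A] unfolding A2_def by (auto simp: card_insert_if)
      then have "gval (insert k T0) \<le> gval T0" using gopt T0 by blast
      then show False using gval_insert[OF T0A k(2)] pk by simp
    next
      case False
      then have cT: "card T0 = b2" using T0A unfolding A2_def by auto
      have "\<not> T0 \<subseteq> K"
      proof
        assume "T0 \<subseteq> K"
        then have "card T0 \<le> card K" by (rule card_mono[OF finK])
        then show False using cT cK by simp
      qed
      then obtain e where e: "e \<in> T0" "e \<notin> K" by auto
      have eE: "e \<in> E" using e T0A unfolding A2_def by auto
      have pe1: "pe \<sigma>1 e = 1" using p1[OF eE e(2)] pe_le1[OF s1, of e] by simp
      have ek: "e \<noteq> k" using e k by auto
      have "card (T0 - {e}) \<le> card T0" by (rule card_Diff1_le)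
      then have TmA: "T0 - {e} \<in> AA2" using T0A unfolding A2_def by auto
      have cTm: "card (T0 - {e}) < b2" using cT e finT[OF T0A] b2_pos by (simp add: card_Diff1_less)
      have "insert k (T0 - {e}) \<in> AA2" using TmA cTm kE finT[OF TmA] unfolding A2_def by (auto simp: card_insert_if)
      then have "gval (insert k (T0 - {e})) \<le> gval T0" using gopt T0 by blast
      moreover have "gval (insert k (T0 - {e})) = gval (T0 - {e}) + (1 - pe \<sigma>1 k)"
        using gval_insert[OF TmA] k by simp
      moreover have "gval T0 = gval (T0 - {e})" using gval_remove[OF T0A e(1)] pe1 by simp
      ultimately show False using pk by simp
    qed
  qed
  obtain S where S: "S \<in> set_pmf \<sigma>1" using set_pmf_not_empty by fast
  have SA: "S \<in> AA1" using S s1 by auto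
  have SV: "S \<subseteq> V" and cS: "card S \<le> b1" using SA unfolding A1_def by auto
  have finS: "finite S" using SV finV finite_subset by blast
  have EK: "E - CS C S \<subseteq> K"
  proof
    fix e assume e: "e \<in> E - CS C S"
    show "e \<in> K"
    proof (rule ccontr)
      assume "e \<notin> K"
      then have "pe \<sigma>1 e \<ge> 1" using p1 e by auto
      then have "e \<in> CS C S" using pe_one[OF s1 _ S] by blast
      then show False using e by auto
    qed
  qed
  have "CS C S \<noteq> E"
  proof
    assume "CS C S = E"
    then have "set_cover V E C S" unfolding set_cover_def using SV by auto
    then have "n_star V E C \<le> card S" by (rule nstar_le)
    then show False using cS b1_lt by simp
  qed
  then obtain k where k: "k \<in> E" "k \<notin> CS C S" using CS_sub[OF SV] by auto
  obtain w where w: "w \<in> V" "k \<in> C w" using covE[OF k(1)] by auto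
  define U where "U i = CS C S - CS C (S - {i})" for i
  define u where "u i = (\<Sum>T\<in>AA2. pmf \<sigma>2 T * real (card (U i \<inter> T)))" for i
  have sum1: "(\<Sum>T\<in>AA2. pmf \<sigma>2 T) = 1" using sum_pmf_eq_1 finA2 s2 by blast
  have each: "1 \<le> u i" if i: "i \<in> S" for i
  proof -
    define S' where "S' = insert w (S - {i})"
    have c1: "card S' \<le> Suc (card (S - {i}))" unfolding S'_def using finS by (simp add: card_insert_if)
    have c2: "Suc (card (S - {i})) = card S" by (rule card_Suc_Diff1[OF finS i])
    have S'V: "S' \<subseteq> V" unfolding S'_def using SV w by auto
    have S'A: "S' \<in> AA1" unfolding A1_def using S'V c1 c2 cS by simp
    have le: "v1 \<sigma>2 S' \<le> v1 \<sigma>2 S" using pure1[OF S'A] supp1[OF S] by simp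
    have pt: "pmf \<sigma>2 T * (real (detF C S T) + 1) \<le> pmf \<sigma>2 T * (real (detF C S' T) + real (card (U i \<inter> T)))"
      if T: "T \<in> AA2" for T
    proof (cases "T \<in> set_pmf \<sigma>2")
      case False
      then show ?thesis by (simp add: set_pmf_iff)
    next
      case True
      have fT: "finite T" using finT[OF T] .
      have kT: "k \<in> T" using KT[OF True] EK k by auto
      have a: "CS C S \<inter> T \<subseteq> (U i \<inter> T) \<union> (CS C (S - {i}) \<inter> T)" unfolding U_def by auto
      have c1: "card (CS C S \<inter> T) \<le> card (U i \<inter> T) + card (CS C (S - {i}) \<inter> T)"
        using card_mono[OF _ a] card_Un_le[of "U i \<inter> T" "CS C (S - {i}) \<inter> T"] fT by fastforce
      have sub: "CS C (S - {i}) \<subseteq> CS C S" unfolding CS_def by auto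
      have kn: "k \<notin> CS C (S - {i}) \<inter> T" using k sub by auto
      have b: "insert k (CS C (S - {i}) \<inter> T) \<subseteq> CS C S' \<inter> T"
        unfolding S'_def CS_def using kT w by auto
      have c2: "card (CS C (S - {i}) \<inter> T) + 1 \<le> card (CS C S' \<inter> T)"
        using card_mono[OF _ b] fT kn by simp
      from c1 c2 have "card (CS C S \<inter> T) + 1 \<le> card (CS C S' \<inter> T) + card (U i \<inter> T)" by linarith
      then have "real (detF C S T) + 1 \<le> real (detF C S' T) + real (card (U i \<inter> T))"
        unfolding detF_def by linarith
      then show ?thesis by (simp add: mult_left_mono pmf_nonneg)
    qed
    have "(\<Sum>T\<in>AA2. pmf \<sigma>2 T * (real (detF C S T) + 1)) \<le>
          (\<Sum>T\<in>AA2. pmf \<sigma>2 T * (real (detF C S' T) + real (card (U i \<inter> T))))"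
      by (rule sum_mono) (rule pt)
    then have "v1 \<sigma>2 S + 1 \<le> v1 \<sigma>2 S' + u i"
      unfolding v1_def u_def by (simp add: algebra_simps sum.distrib sum1)
    then show ?thesis using le by simp
  qed
  have Ui: "U i \<subseteq> C i" for i unfolding U_def CS_def by auto
  have Uj: "U i \<inter> C j = {}" if "j \<in> S" "j \<noteq> i" for i j
  proof -
    have "C j \<subseteq> CS C (S - {i})" using that unfolding CS_def by auto
    then show ?thesis unfolding U_def by auto
  qed
  have disj: "\<forall>i\<in>S. \<forall>j\<in>S. i \<noteq> j \<longrightarrow> U i \<inter> U j = {}"
  proof (intro ballI impI)
    fix i j assume ij: "i \<in> S" "j \<in> S" "i \<noteq> j"
    have "j \<noteq> i" using ij(3) by simp
    then have 1: "U i \<inter> C j = {}" by (rule Uj[OF ij(2)])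
    have 2: "U j \<subseteq> C j" by (rule Ui)
    show "U i \<inter> U j = {}"
    proof (rule equals0I)
      fix x assume x: "x \<in> U i \<inter> U j"
      then have "x \<in> C j" using 2 by auto
      moreover have "x \<notin> C j" using 1 x by auto
      ultimately show False by simp
    qed
  qed
  have ub: "(\<Sum>i\<in>S. real (card (U i \<inter> T))) \<le> real b2 - real (card (K - CS C S))"
    if T: "T \<in> set_pmf \<sigma>2" for T
  proof -
    have TA: "T \<in> AA2" using T s2 by auto
    have fT: "finite T" using finT[OF TA] .
    have "(\<Sum>i\<in>S. card (U i \<inter> T)) = card (\<Union>i\<in>S. U i \<inter> T)"
      by (rule card_UN_disjoint[symmetric]) (use finS fT disj in auto)
    also have "\<dots> \<le> card (CS C S \<inter> T)"
      by (rule card_mono) (use fT in \<open>auto simp: U_def\<close>)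
    finally have x1: "(\<Sum>i\<in>S. card (U i \<inter> T)) \<le> card (CS C S \<inter> T)" .
    have "card (CS C S \<inter> T) + card (T - CS C S) = card T"
      using card_Int_Diff[OF fT, of "CS C S"] by (simp add: Int_commute)
    moreover have "card (K - CS C S) \<le> card (T - CS C S)"
      by (rule card_mono) (use fT KT[OF T] in auto)
    moreover have "card T \<le> b2" using TA unfolding A2_def by auto
    ultimately have "(\<Sum>i\<in>S. card (U i \<inter> T)) + card (K - CS C S) \<le> b2" using x1 by linarith
    then have "real (\<Sum>i\<in>S. card (U i \<inter> T)) + real (card (K - CS C S)) \<le> real b2"
      by (simp only: of_nat_add[symmetric] of_nat_le_iff)
    then show ?thesis by simp
  qed
  have "real (card S) \<le> (\<Sum>i\<in>S. u i)"
    using sum_mono[of S "\<lambda>_. (1::real)" u] each by simp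
  also have "\<dots> = (\<Sum>T\<in>AA2. pmf \<sigma>2 T * (\<Sum>i\<in>S. real (card (U i \<inter> T))))"
    unfolding u_def by (subst sum.swap) (simp add: sum_distrib_left)
  also have "\<dots> \<le> (\<Sum>T\<in>AA2. pmf \<sigma>2 T * (real b2 - real (card (K - CS C S))))"
  proof (rule sum_mono)
    fix T assume "T \<in> AA2"
    show "pmf \<sigma>2 T * (\<Sum>i\<in>S. real (card (U i \<inter> T))) \<le> pmf \<sigma>2 T * (real b2 - real (card (K - CS C S)))"
    proof (cases "T \<in> set_pmf \<sigma>2")
      case True then show ?thesis using ub by (simp add: mult_left_mono pmf_nonneg)
    next
      case False then show ?thesis by (simp add: set_pmf_iff)
    qed
  qed
  also have "\<dots> = real b2 - real (card (K - CS C S))"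
    by (simp add: sum_distrib_right[symmetric] sum1)
  finally have A: "card S + card (K - CS C S) \<le> b2" by linarith
  obtain P where P: "set_packing V E C P" "card P = m_star V E C" using mstar_ex by blast
  have PE: "P \<subseteq> E" and P1: "\<forall>i\<in>V. card (C i \<inter> P) \<le> 1" using P(1) unfolding set_packing_def by auto
  have finP: "finite P" using PE finE finite_subset by blast
  have "card (P \<inter> CS C S) = card (\<Union>i\<in>S. C i \<inter> P)"
    unfolding CS_def by (rule arg_cong[where f=card]) auto
  also have "\<dots> \<le> (\<Sum>i\<in>S. card (C i \<inter> P))" by (rule card_UN_le[OF finS])
  also have "\<dots> \<le> (\<Sum>i\<in>S. 1)" by (rule sum_mono) (use P1 SV in auto)
  finally have B: "card (P \<inter> CS C S) \<le> card S" by simp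
  have "card (P - CS C S) \<le> card (K - CS C S)"
    by (rule card_mono) (use finK PE EK in auto)
  moreover have "card P = card (P \<inter> CS C S) + card (P - CS C S)"
    using card_Int_Diff[OF finP, of "CS C S"] .
  ultimately have "m_star V E C \<le> b2" using A B P(2) by linarith
  then show False using b2_lt by simp
qed

lemma NE_card: "T \<in> set_pmf \<sigma>2 \<Longrightarrow> card T = b2"
proof (rule ccontr)
  assume T: "T \<in> set_pmf \<sigma>2" and ne': "card T \<noteq> b2"
  have TA: "T \<in> AA2" using T s2 by auto
  then have lt: "card T < b2" using ne' unfolding A2_def by auto
  let ?K = "{e\<in>E. pe \<sigma>1 e < 1}"
  have "\<not> ?K \<subseteq> T"
  proof
    assume "?K \<subseteq> T"
    then have "card ?K \<le> card T" by (rule card_mono[OF finT[OF TA]])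
    with NE_card_aux have "b2 \<le> card T" by (rule le_trans)
    then show False using lt by simp
  qed
  then obtain k where k: "k \<in> E" "pe \<sigma>1 k < 1" "k \<notin> T" by auto
  have "insert k T \<in> AA2" using TA lt k finT[OF TA] unfolding A2_def by (auto simp: card_insert_if)
  then have "gval (insert k T) \<le> gval T" using gopt T by blast
  then show False using gval_insert[OF TA k(3)] k(2) by simp
qed

end

context
  fixes \<sigma>1 \<sigma>2
  assumes ne: "is_NE V E C b1 b2 \<sigma>1 \<sigma>2"
begin

lemma sum1_2: "(\<Sum>T\<in>AA2. pmf \<sigma>2 T) = 1" using sum_pmf_eq_1 finA2 s2[OF ne] by blast
lemma sum1_1: "(\<Sum>S\<in>AA1. pmf \<sigma>1 S) = 1" using sum_pmf_eq_1 finA1 s1[OF ne] by blast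

lemma Ec2: "Ec \<sigma>2 = real b2"
proof -
  have "Ec \<sigma>2 = (\<Sum>T\<in>AA2. pmf \<sigma>2 T * real b2)"
    unfolding Ec_def
  proof (rule sum.cong[OF refl])
    fix T assume "T \<in> AA2"
    show "pmf \<sigma>2 T * real (card T) = pmf \<sigma>2 T * real b2"
    proof (cases "T \<in> set_pmf \<sigma>2")
      case True then show ?thesis using NE_card[OF ne] by simp
    next
      case False then show ?thesis by (simp add: set_pmf_iff)
    qed
  qed
  also have "\<dots> = real b2" by (simp add: sum_distrib_right[symmetric] sum1_2)
  finally show ?thesis .
qed

lemma U2v: "U2 C \<sigma>1 \<sigma>2 = real b2 - U1 C \<sigma>1 \<sigma>2"
  using U2_eq[OF s1[OF ne] s2[OF ne]] Ec2 by simp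

lemma U1_le_b2: "U1 C \<sigma>1 \<sigma>2 \<le> real b2"
proof -
  have e: "{} \<in> AA2" unfolding A2_def by simp
  have "w1 \<sigma>1 {} = 0" using w1_pe[OF e] by simp
  then show ?thesis using pure2[OF ne e] Ec2 by simp
qed

lemma rate: "detection_rate C \<sigma>1 \<sigma>2 = U1 C \<sigma>1 \<sigma>2 / real b2"
proof -
  have "detection_rate C \<sigma>1 \<sigma>2 = (\<Sum>S\<in>AA1. \<Sum>T\<in>AA2. pmf \<sigma>1 S * pmf \<sigma>2 T * (real (detF C S T) / real (card T)))"
    unfolding detection_rate_def by (rule pair_sum[OF finA1 finA2 s1[OF ne] s2[OF ne]])
  also have "\<dots> = (\<Sum>S\<in>AA1. \<Sum>T\<in>AA2. pmf \<sigma>1 S * pmf \<sigma>2 T * real (detF C S T) / real b2)"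
  proof (intro sum.cong refl)
    fix S T assume "T \<in> AA2"
    show "pmf \<sigma>1 S * pmf \<sigma>2 T * (real (detF C S T) / real (card T)) = pmf \<sigma>1 S * pmf \<sigma>2 T * real (detF C S T) / real b2"
    proof (cases "T \<in> set_pmf \<sigma>2")
      case True then show ?thesis using NE_card[OF ne] by simp
    next
      case False then show ?thesis by (simp add: set_pmf_iff)
    qed
  qed
  also have "\<dots> = (\<Sum>S\<in>AA1. \<Sum>T\<in>AA2. pmf \<sigma>1 S * pmf \<sigma>2 T * real (detF C S T)) / real b2"
    by (simp add: sum_divide_distrib)
  also have "\<dots> = U1 C \<sigma>1 \<sigma>2 / real b2" using U1_sum[OF s1[OF ne] s2[OF ne]] by simp
  finally show ?thesis .
qed

lemma low: "real b1 * real b2 / real (n_star V E C) \<le> U1 C \<sigma>1 \<sigma>2"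
proof -
  obtain Sx where Sx: "set_cover V E C Sx" "card Sx = n_star V E C" using nstar_ex by blast
  define n where "n = n_star V E C"
  have SxV: "Sx \<subseteq> V" and SxE: "CS C Sx = E" using Sx(1) unfolding set_cover_def by auto
  have finSx: "finite Sx" using SxV finV finite_subset by blast
  have cSx: "card Sx = n" using Sx(2) n_def by simp
  have b1n: "b1 < n" using b1_lt n_def by simp
  define X where "X = {S. S \<subseteq> Sx \<and> card S = b1}"
  have XA: "X \<subseteq> AA1" unfolding X_def A1_def using SxV by auto
  have finX: "finite X" using finite_subset[OF XA finA1] .
  have cX: "card X = n choose b1" unfolding X_def using n_subsets[OF finSx, of b1] cSx by simp
  define M where "M = (n - 1) choose (b1 - 1)"
  have key: "b1 * card X = n * M" unfolding cX M_def by (rule times_binomial_minus1_eq[OF b1_pos])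
  have cXpos: "card X > 0" unfolding cX using b1n by simp
  have npos: "n > 0" using b1n by simp
  have cnt: "real M \<le> real (card {S\<in>X. e \<in> CS C S})" if e: "e \<in> E" for e
  proof -
    obtain j where j: "j \<in> Sx" "e \<in> C j" using e SxE unfolding CS_def by auto
    have "{S. S \<subseteq> Sx \<and> card S = b1 \<and> j \<in> S} \<subseteq> {S\<in>X. e \<in> CS C S}"
      unfolding X_def CS_def using j by auto
    then have "card {S. S \<subseteq> Sx \<and> card S = b1 \<and> j \<in> S} \<le> card {S\<in>X. e \<in> CS C S}"
      by (rule card_mono[rotated]) (use finX in simp)
    moreover have "card {S. S \<subseteq> Sx \<and> card S = b1 \<and> j \<in> S} = M"
      unfolding M_def using count_with[OF finSx j(1) b1_pos] cSx by simp
    ultimately show ?thesis by simp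
  qed
  have pw: "real b2 * real M \<le> (\<Sum>S\<in>X. real (detF C S T))" if T: "T \<in> set_pmf \<sigma>2" for T
  proof -
    have TA: "T \<in> AA2" using T s2[OF ne] by auto
    have TE: "T \<subseteq> E" using TA unfolding A2_def by auto
    have fT: "finite T" using finT[OF ne TA] .
    have "real b2 * real M = (\<Sum>e\<in>T. real M)" using NE_card[OF ne T] by simp
    also have "\<dots> \<le> (\<Sum>e\<in>T. real (card {S\<in>X. e \<in> CS C S}))"
      by (rule sum_mono) (use cnt TE in auto)
    also have "\<dots> = (\<Sum>S\<in>X. real (detF C S T))"
      unfolding detF_def by (rule dc[OF finX fT, symmetric])
    finally show ?thesis .
  qed
  have "(\<Sum>S\<in>X. v1 \<sigma>2 S) \<le> (\<Sum>S\<in>X. U1 C \<sigma>1 \<sigma>2)"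
    by (rule sum_mono) (use pure1[OF ne] XA in auto)
  also have "\<dots> = real (card X) * U1 C \<sigma>1 \<sigma>2" by simp
  finally have A: "(\<Sum>S\<in>X. v1 \<sigma>2 S) \<le> real (card X) * U1 C \<sigma>1 \<sigma>2" .
  have "(\<Sum>S\<in>X. v1 \<sigma>2 S) = (\<Sum>T\<in>AA2. pmf \<sigma>2 T * (\<Sum>S\<in>X. real (detF C S T)))"
    unfolding v1_def by (subst sum.swap) (simp add: sum_distrib_left)
  also have "\<dots> \<ge> (\<Sum>T\<in>AA2. pmf \<sigma>2 T * (real b2 * real M))"
  proof (rule sum_mono)
    fix T assume "T \<in> AA2"
    show "pmf \<sigma>2 T * (real b2 * real M) \<le> pmf \<sigma>2 T * (\<Sum>S\<in>X. real (detF C S T))"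
    proof (cases "T \<in> set_pmf \<sigma>2")
      case True then show ?thesis using pw by (simp add: mult_left_mono pmf_nonneg)
    next
      case False then show ?thesis by (simp add: set_pmf_iff)
    qed
  qed
  finally have B: "real b2 * real M \<le> (\<Sum>S\<in>X. v1 \<sigma>2 S)"
    by (simp add: sum_distrib_right[symmetric] sum1_2)
  have C1: "real b2 * real M \<le> real (card X) * U1 C \<sigma>1 \<sigma>2" using A B by linarith
  have keyr: "real b1 * real (card X) = real n * real M" using key by (metis of_nat_mult)
  have "real (card X) * (real b1 * real b2) = real b2 * (real n * real M)"
    using keyr by (simp add: algebra_simps)
  also have "\<dots> \<le> real n * (real (card X) * U1 C \<sigma>1 \<sigma>2)"
    using C1 npos by (simp add: mult_left_mono algebra_simps)
  finally have "real (card X) * (real b1 * real b2) \<le> real (card X) * (real n * U1 C \<sigma>1 \<sigma>2)"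
    by (simp add: algebra_simps)
  then have "real b1 * real b2 \<le> real n * U1 C \<sigma>1 \<sigma>2"
    using cXpos by (simp add: mult_le_cancel_left_pos)
  then show ?thesis unfolding n_def[symmetric] using npos by (simp add: divide_le_eq mult.commute)
qed

lemma up: "U1 C \<sigma>1 \<sigma>2 \<le> real b1 * real b2 / real (m_star V E C)"
proof -
  obtain P where P: "set_packing V E C P" "card P = m_star V E C" using mstar_ex by blast
  define m where "m = m_star V E C"
  have PE: "P \<subseteq> E" and P1: "\<forall>i\<in>V. card (C i \<inter> P) \<le> 1" using P(1) unfolding set_packing_def by auto
  have finP: "finite P" using PE finE finite_subset by blast
  have cP: "card P = m" using P(2) m_def by simp
  have b2m: "b2 < m" using b2_lt m_def by simp
  define Y where "Y = {T. T \<subseteq> P \<and> card T = b2}"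
  have YA: "Y \<subseteq> AA2" unfolding Y_def A2_def using PE by auto
  have finY: "finite Y" using finite_subset[OF YA finA2] .
  have cY: "card Y = m choose b2" unfolding Y_def using n_subsets[OF finP, of b2] cP by simp
  define M where "M = (m - 1) choose (b2 - 1)"
  have key: "b2 * card Y = m * M" unfolding cY M_def by (rule times_binomial_minus1_eq[OF b2_pos])
  have cYpos: "card Y > 0" unfolding cY using b2m by simp
  have mpos: "m > 0" using b2m by simp
  have perT: "U1 C \<sigma>1 \<sigma>2 \<le> w1 \<sigma>1 T" if T: "T \<in> Y" for T
  proof -
    have TA: "T \<in> AA2" using T YA by auto
    have "card T = b2" using T unfolding Y_def by auto
    then show ?thesis using pure2[OF ne TA] Ec2 by simp
  qed
  have perS: "(\<Sum>T\<in>Y. real (detF C S T)) \<le> real b1 * real M" if S: "S \<in> AA1" for S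
  proof -
    have SV: "S \<subseteq> V" and cS: "card S \<le> b1" using S unfolding A1_def by auto
    have finS: "finite S" using SV finV finite_subset by blast
    have a: "real (detF C S T) \<le> (\<Sum>i\<in>S. real (card (C i \<inter> T)))" for T
    proof -
      have "CS C S \<inter> T = (\<Union>i\<in>S. C i \<inter> T)" unfolding CS_def by auto
      then have "card (CS C S \<inter> T) \<le> (\<Sum>i\<in>S. card (C i \<inter> T))"
        using card_UN_le[OF finS, of "\<lambda>i. C i \<inter> T"] by simp
      then show ?thesis unfolding detF_def by (simp add: of_nat_sum[symmetric] del: of_nat_sum)
    qed
    have b: "(\<Sum>T\<in>Y. real (card (C i \<inter> T))) \<le> real M" if i: "i \<in> S" for i
    proof -
      have iV: "i \<in> V" using i SV by auto
      have fB: "finite (C i \<inter> P)" using finP by simp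
      have "(\<Sum>T\<in>Y. real (card (C i \<inter> T))) = (\<Sum>T\<in>Y. real (card (id T \<inter> (C i \<inter> P))))"
      proof (rule sum.cong[OF refl])
        fix T assume "T \<in> Y"
        then have "T \<subseteq> P" by (simp add: Y_def)
        then have "C i \<inter> T = id T \<inter> (C i \<inter> P)" by auto
        then show "real (card (C i \<inter> T)) = real (card (id T \<inter> (C i \<inter> P)))" by simp
      qed
      also have "\<dots> = (\<Sum>e\<in>C i \<inter> P. real (card {T\<in>Y. e \<in> id T}))"
        by (rule dc[OF finY fB])
      also have "\<dots> = (\<Sum>e\<in>C i \<inter> P. real M)"
      proof (rule sum.cong[OF refl])
        fix e assume e: "e \<in> C i \<inter> P"
        have "{T\<in>Y. e \<in> id T} = {T. T \<subseteq> P \<and> card T = b2 \<and> e \<in> T}" unfolding Y_def by auto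
        then show "real (card {T\<in>Y. e \<in> id T}) = real M"
          using count_with[OF finP _ b2_pos, of e] e cP M_def by simp
      qed
      also have "\<dots> = real (card (C i \<inter> P)) * real M" by simp
      also have "\<dots> \<le> 1 * real M" using P1 iV by (intro mult_right_mono) auto
      finally show ?thesis by simp
    qed
    have "(\<Sum>T\<in>Y. real (detF C S T)) \<le> (\<Sum>T\<in>Y. \<Sum>i\<in>S. real (card (C i \<inter> T)))"
      by (rule sum_mono) (rule a)
    also have "\<dots> = (\<Sum>i\<in>S. \<Sum>T\<in>Y. real (card (C i \<inter> T)))" by (rule sum.swap)
    also have "\<dots> \<le> (\<Sum>i\<in>S. real M)" by (rule sum_mono) (rule b)
    also have "\<dots> = real (card S) * real M" by simp
    also have "\<dots> \<le> real b1 * real M" using cS by (intro mult_right_mono) auto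
    finally show ?thesis .
  qed
  have "real (card Y) * U1 C \<sigma>1 \<sigma>2 = (\<Sum>T\<in>Y. U1 C \<sigma>1 \<sigma>2)" by simp
  also have "\<dots> \<le> (\<Sum>T\<in>Y. w1 \<sigma>1 T)" by (rule sum_mono) (rule perT)
  also have "\<dots> = (\<Sum>S\<in>AA1. pmf \<sigma>1 S * (\<Sum>T\<in>Y. real (detF C S T)))"
    unfolding w1_def by (subst sum.swap) (simp add: sum_distrib_left)
  also have "\<dots> \<le> (\<Sum>S\<in>AA1. pmf \<sigma>1 S * (real b1 * real M))"
    by (rule sum_mono) (use perS in \<open>simp add: mult_left_mono pmf_nonneg\<close>)
  also have "\<dots> = real b1 * real M" by (simp add: sum_distrib_right[symmetric] sum1_1)
  finally have C1: "real (card Y) * U1 C \<sigma>1 \<sigma>2 \<le> real b1 * real M" .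
  have keyr: "real b2 * real (card Y) = real m * real M" using key by (metis of_nat_mult)
  have "real (card Y) * (U1 C \<sigma>1 \<sigma>2 * real m) \<le> real m * (real b1 * real M)"
    using C1 mpos by (simp add: mult_left_mono algebra_simps)
  also have "\<dots> = real (card Y) * (real b1 * real b2)"
    using keyr by (simp add: algebra_simps)
  finally have "U1 C \<sigma>1 \<sigma>2 * real m \<le> real b1 * real b2"
    using cYpos by (simp add: mult_le_cancel_left_pos)
  then show ?thesis unfolding m_def[symmetric] using mpos by (simp add: le_divide_eq)
qed

end

lemma uniq:
  assumes a: "is_NE V E C b1 b2 \<sigma>1 \<sigma>2" and b: "is_NE V E C b1 b2 \<tau>1 \<tau>2"
  shows "U1 C \<sigma>1 \<sigma>2 = U1 C \<tau>1 \<tau>2"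
proof -
  have 1: "U1 C \<tau>1 \<sigma>2 \<le> U1 C \<sigma>1 \<sigma>2" by (rule ne3[OF a s1[OF b]])
  have 2: "U1 C \<sigma>1 \<tau>2 \<le> U1 C \<tau>1 \<tau>2" by (rule ne3[OF b s1[OF a]])
  have "U2 C \<sigma>1 \<tau>2 \<le> U2 C \<sigma>1 \<sigma>2" by (rule ne4[OF a s2[OF b]])
  then have 3: "U1 C \<sigma>1 \<sigma>2 \<le> U1 C \<sigma>1 \<tau>2"
    using U2_eq[OF s1[OF a] s2[OF b]] U2v[OF a] Ec2[OF b] by simp
  have "U2 C \<tau>1 \<sigma>2 \<le> U2 C \<tau>1 \<tau>2" by (rule ne4[OF b s2[OF a]])
  then have 4: "U1 C \<tau>1 \<tau>2 \<le> U1 C \<tau>1 \<sigma>2"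
    using U2_eq[OF s1[OF b] s2[OF a]] U2v[OF b] Ec2[OF a] by simp
  from 1 2 3 4 show ?thesis by linarith
qed

end

theorem theorem1:
  fixes V :: "'v set" and E :: "'e set" and C :: "'v \<Rightarrow> 'e set" and b1 b2 :: nat
  assumes model: "detection_model V E C"
    and b1_pos: "b1 > 0" and b2_pos: "b2 > 0"
    and b1_lt: "b1 < n_star V E C" and b2_lt: "b2 < m_star V E C"
  shows "(\<forall>\<sigma>1 \<sigma>2 \<tau>1 \<tau>2. is_NE V E C b1 b2 \<sigma>1 \<sigma>2 \<longrightarrow> is_NE V E C b1 b2 \<tau>1 \<tau>2 \<longrightarrow>
            U1 C \<sigma>1 \<sigma>2 = U1 C \<tau>1 \<tau>2 \<and> U2 C \<sigma>1 \<sigma>2 = U2 C \<tau>1 \<tau>2)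
       \<and> (\<forall>\<sigma>1 \<sigma>2. is_NE V E C b1 b2 \<sigma>1 \<sigma>2 \<longrightarrow>
            real b1 * real b2 / real (n_star V E C) \<le> U1 C \<sigma>1 \<sigma>2
          \<and> U1 C \<sigma>1 \<sigma>2 \<le> min (real b1 * real b2 / real (m_star V E C)) (real b2)
          \<and> max 0 (real b2 * (1 - real b1 / real (m_star V E C))) \<le> U2 C \<sigma>1 \<sigma>2
          \<and> U2 C \<sigma>1 \<sigma>2 \<le> real b2 * (1 - real b1 / real (n_star V E C)))
       \<and> (\<forall>\<sigma>1 \<sigma>2 \<tau>1 \<tau>2. is_NE V E C b1 b2 \<sigma>1 \<sigma>2 \<longrightarrow> is_NE V E C b1 b2 \<tau>1 \<tau>2 \<longrightarrow>
            detection_rate C \<sigma>1 \<sigma>2 = detection_rate C \<tau>1 \<tau>2)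
       \<and> (\<forall>\<sigma>1 \<sigma>2. is_NE V E C b1 b2 \<sigma>1 \<sigma>2 \<longrightarrow>
            real b1 / real (n_star V E C) \<le> detection_rate C \<sigma>1 \<sigma>2
          \<and> detection_rate C \<sigma>1 \<sigma>2 \<le> min (real b1 / real (m_star V E C)) 1)"
proof -
  interpret g: game V E C b1 b2
    by (rule game.intro) (rule model b1_pos b2_pos b1_lt b2_lt)+
  have b2r: "real b2 > 0" using b2_pos by simp
  have A: "\<forall>\<sigma>1 \<sigma>2 \<tau>1 \<tau>2. is_NE V E C b1 b2 \<sigma>1 \<sigma>2 \<longrightarrow> is_NE V E C b1 b2 \<tau>1 \<tau>2 \<longrightarrow>
            U1 C \<sigma>1 \<sigma>2 = U1 C \<tau>1 \<tau>2 \<and> U2 C \<sigma>1 \<sigma>2 = U2 C \<tau>1 \<tau>2"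
  proof (intro allI impI)
    fix \<sigma>1 \<sigma>2 \<tau>1 \<tau>2
    assume a: "is_NE V E C b1 b2 \<sigma>1 \<sigma>2" and b: "is_NE V E C b1 b2 \<tau>1 \<tau>2"
    have "U1 C \<sigma>1 \<sigma>2 = U1 C \<tau>1 \<tau>2" by (rule g.uniq[OF a b])
    then show "U1 C \<sigma>1 \<sigma>2 = U1 C \<tau>1 \<tau>2 \<and> U2 C \<sigma>1 \<sigma>2 = U2 C \<tau>1 \<tau>2"
      using g.U2v[OF a] g.U2v[OF b] by simp
  qed
  have B: "\<forall>\<sigma>1 \<sigma>2. is_NE V E C b1 b2 \<sigma>1 \<sigma>2 \<longrightarrow>
            real b1 * real b2 / real (n_star V E C) \<le> U1 C \<sigma>1 \<sigma>2
          \<and> U1 C \<sigma>1 \<sigma>2 \<le> min (real b1 * real b2 / real (m_star V E C)) (real b2)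
          \<and> max 0 (real b2 * (1 - real b1 / real (m_star V E C))) \<le> U2 C \<sigma>1 \<sigma>2
          \<and> U2 C \<sigma>1 \<sigma>2 \<le> real b2 * (1 - real b1 / real (n_star V E C))"
  proof (intro allI impI)
    fix \<sigma>1 \<sigma>2 assume a: "is_NE V E C b1 b2 \<sigma>1 \<sigma>2"
    have l: "real b1 * real b2 / real (n_star V E C) \<le> U1 C \<sigma>1 \<sigma>2" by (rule g.low[OF a])
    have u: "U1 C \<sigma>1 \<sigma>2 \<le> real b1 * real b2 / real (m_star V E C)" by (rule g.up[OF a])
    have b: "U1 C \<sigma>1 \<sigma>2 \<le> real b2" by (rule g.U1_le_b2[OF a])
    have v: "U2 C \<sigma>1 \<sigma>2 = real b2 - U1 C \<sigma>1 \<sigma>2" by (rule g.U2v[OF a])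
    have em: "real b2 * (1 - real b1 / real (m_star V E C)) = real b2 - real b1 * real b2 / real (m_star V E C)"
      by (simp add: algebra_simps)
    have en: "real b2 * (1 - real b1 / real (n_star V E C)) = real b2 - real b1 * real b2 / real (n_star V E C)"
      by (simp add: algebra_simps)
    show "real b1 * real b2 / real (n_star V E C) \<le> U1 C \<sigma>1 \<sigma>2
          \<and> U1 C \<sigma>1 \<sigma>2 \<le> min (real b1 * real b2 / real (m_star V E C)) (real b2)
          \<and> max 0 (real b2 * (1 - real b1 / real (m_star V E C))) \<le> U2 C \<sigma>1 \<sigma>2
          \<and> U2 C \<sigma>1 \<sigma>2 \<le> real b2 * (1 - real b1 / real (n_star V E C))"
      unfolding em en v using l u b by simp
  qed
  have C: "\<forall>\<sigma>1 \<sigma>2 \<tau>1 \<tau>2. is_NE V E C b1 b2 \<sigma>1 \<sigma>2 \<longrightarrow> is_NE V E C b1 b2 \<tau>1 \<tau>2 \<longrightarrow>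
            detection_rate C \<sigma>1 \<sigma>2 = detection_rate C \<tau>1 \<tau>2"
  proof (intro allI impI)
    fix \<sigma>1 \<sigma>2 \<tau>1 \<tau>2
    assume a: "is_NE V E C b1 b2 \<sigma>1 \<sigma>2" and b: "is_NE V E C b1 b2 \<tau>1 \<tau>2"
    show "detection_rate C \<sigma>1 \<sigma>2 = detection_rate C \<tau>1 \<tau>2"
      unfolding g.rate[OF a] g.rate[OF b] g.uniq[OF a b] ..
  qed
  have D: "\<forall>\<sigma>1 \<sigma>2. is_NE V E C b1 b2 \<sigma>1 \<sigma>2 \<longrightarrow>
            real b1 / real (n_star V E C) \<le> detection_rate C \<sigma>1 \<sigma>2
          \<and> detection_rate C \<sigma>1 \<sigma>2 \<le> min (real b1 / real (m_star V E C)) 1"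
  proof (intro allI impI)
    fix \<sigma>1 \<sigma>2 assume a: "is_NE V E C b1 b2 \<sigma>1 \<sigma>2"
    have l: "real b1 * real b2 / real (n_star V E C) \<le> U1 C \<sigma>1 \<sigma>2" by (rule g.low[OF a])
    have u: "U1 C \<sigma>1 \<sigma>2 \<le> real b1 * real b2 / real (m_star V E C)" by (rule g.up[OF a])
    have b: "U1 C \<sigma>1 \<sigma>2 \<le> real b2" by (rule g.U1_le_b2[OF a])
    have l': "(real b1 * real b2 / real (n_star V E C)) / real b2 \<le> U1 C \<sigma>1 \<sigma>2 / real b2"
      using l b2r by (rule divide_right_mono[OF _ less_imp_le])
    have u': "U1 C \<sigma>1 \<sigma>2 / real b2 \<le> (real b1 * real b2 / real (m_star V E C)) / real b2"
      using u b2r by (rule divide_right_mono[OF _ less_imp_le])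
    have b': "U1 C \<sigma>1 \<sigma>2 / real b2 \<le> real b2 / real b2"
      using b b2r by (rule divide_right_mono[OF _ less_imp_le])
    have e1: "(real b1 * real b2 / real (n_star V E C)) / real b2 = real b1 / real (n_star V E C)"
      using b2r by simp
    have e2: "(real b1 * real b2 / real (m_star V E C)) / real b2 = real b1 / real (m_star V E C)"
      using b2r by simp
    show "real b1 / real (n_star V E C) \<le> detection_rate C \<sigma>1 \<sigma>2
          \<and> detection_rate C \<sigma>1 \<sigma>2 \<le> min (real b1 / real (m_star V E C)) 1"
      unfolding g.rate[OF a] using l' u' b' e1 e2 b2r by simp
  qed
  show ?thesis by (intro conjI A B C D)
qed

end
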